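(* Let $p$ be a prime, $n\ge2$, let $F,G:\mathbb{F}_p^n\to\mathbb{F}_p^n$ and let $\mathcal{E}=\{e_1,\dots,e_n\}$ be a basis of $\mathbb{F}_p^n$ over $\mathbb{F}_p$ with coordinates $x_1,\dots,x_n$ relative to $\mathcal{E}$. Then \[\Delta_{e_1}F(x_1,\dots,x_n)=\Delta_{e_2}G(x_1,\dots,x_n)\quad\text{for all }(x_1,\dots,x_n)\in\mathbb{F}_p^n\] if and only if for every nonzero $\mu\in\mathbb{F}_p^n$, writing the algebraic normal forms \[\mu\cdot F=\sum_{(i_1,\dots,i_n)}f^{(\mu)}_{(i_1,\dots,i_n)}\prod_{j=1}^nx_j^{i_j},\qquad \mu\cdot G=\sum_{(i_1,\dots,i_n)}g^{(\mu)}_{(i_1,\dots,i_n)}\prod_{j=1}^nx_j^{i_j},\] the coefficients satisfy \[\sum_{k=i_1+1}^{p-1}\binom{k}{k-i_1}f^{(\mu)}_{(k,i_2,i_3,\dots,i_n)}=\sum_{k=i_2+1}^{p-1}\binom{k}{k-i_2}g^{(\mu)}_{(i_1,k,i_3,\dots,i_n)}\] for all $i_1,i_2\in\{0,\dots,p-2\}$ and $(i_3,\dots,i_n)\in\{0,\dots,p-1\}^{n-2}$, and \[\sum_{k=j+1}^{p-1}\binom{k}{k-j}f^{(\mu)}_{(k,p-1,i_3,\dots,i_n)}=\sum_{k=j+1}^{p-1}\binom{k}{k-j}g^{(\mu)}_{(p-1,k,i_3,\dots,i_n)}=0\] for all $j\in\{0,\dots,p-2\}$ and $(i_3,\dots,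i_n)\in\{0,\dots,p-1\}^{n-2}$.
   Context: $\Delta_aF(x)=F(x+a)-F(x)$ for $a\in\mathbb{F}_p^n$. Writing $x=\sum_jx_je_j$, every function $h:\mathbb{F}_p^n\to\mathbb{F}_p$ has a unique algebraic normal form $h=\sum_{(i_1,\dots,i_n)\in\{0,\dots,p-1\}^n}h_{(i_1,\dots,i_n)}\prod_jx_j^{i_j}$ with coefficients in $\mathbb{F}_p$. For $\mu\in\mathbb{F}_p^n$, $\mu\cdot F$ denotes the component function $x\mapsto\sum_{k=1}^n\mu_kF_k(x)$ where $F=(F_1,\dots,F_n)$ (similarly for $G$). Binomial coefficients are taken modulo $p$ and all equalities are in $\mathbb{F}_p$. *)

theory Defs
  imports "HOL-Computational_Algebra.Primes"
begin

text \<open>Vectors of F_p^n are modelled as functions nat => 'a that vanish from index n on;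
  index j corresponds to the paper's index j+1.\<close>

definition vecs :: "nat \<Rightarrow> (nat \<Rightarrow> 'a::zero) set" where
  "vecs n = {v. \<forall>j\<ge>n. v j = 0}"

definition vadd :: "(nat \<Rightarrow> 'a::plus) \<Rightarrow> (nat \<Rightarrow> 'a) \<Rightarrow> nat \<Rightarrow> 'a" where
  "vadd x y = (\<lambda>k. x k + y k)"

definition vsub :: "(nat \<Rightarrow> 'a::minus) \<Rightarrow> (nat \<Rightarrow> 'a) \<Rightarrow> nat \<Rightarrow> 'a" where
  "vsub x y = (\<lambda>k. x k - y k)"

definition lincomb :: "nat \<Rightarrow> (nat \<Rightarrow> 'a::comm_ring_1) \<Rightarrow> (nat \<Rightarrow> nat \<Rightarrow> 'a) \<Rightarrow> nat \<Rightarrow> 'a" where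
  "lincomb n c e = (\<lambda>k. \<Sum>j<n. c j * e j k)"

definition is_basis :: "nat \<Rightarrow> (nat \<Rightarrow> nat \<Rightarrow> 'a::field) \<Rightarrow> bool" where
  "is_basis n e \<longleftrightarrow> (\<forall>j<n. e j \<in> vecs n)
     \<and> (\<forall>c\<in>vecs n. lincomb n c e = (\<lambda>_. 0) \<longrightarrow> c = (\<lambda>_. 0))
     \<and> (\<forall>v\<in>vecs n. \<exists>c\<in>vecs n. v = lincomb n c e)"

definition expts :: "nat \<Rightarrow> nat \<Rightarrow> (nat \<Rightarrow> nat) set" where
  "expts n p = {i. (\<forall>j<n. i j < p) \<and> (\<forall>j\<ge>n. i j = 0)}"

definition anf_coeff :: "nat \<Rightarrow> ((nat \<Rightarrow> 'a) \<Rightarrow> 'a) \<Rightarrow> (nat \<Rightarrow> nat) \<Rightarrow> 'a::{finite,field}" where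
  "anf_coeff n h = (THE c. (\<forall>i. i \<notin> expts n (card (UNIV :: 'a set)) \<longrightarrow> c i = 0) \<and>
      (\<forall>x\<in>vecs n. h x = (\<Sum>i\<in>expts n (card (UNIV :: 'a set)). c i * (\<Prod>j<n. x j ^ i j))))"

definition comp_fun :: "nat \<Rightarrow> (nat \<Rightarrow> 'a::comm_ring_1) \<Rightarrow> ((nat \<Rightarrow> 'a) \<Rightarrow> (nat \<Rightarrow> 'a)) \<Rightarrow> (nat \<Rightarrow> 'a) \<Rightarrow> 'a" where
  "comp_fun n \<mu> F = (\<lambda>x. \<Sum>k<n. \<mu> k * F x k)"

end

theory Submission imports Defs "HOL-Computational_Algebra.Polynomial" "HOL-Library.FuncSet"
begin

lemma card_fset:
  assumes "finite A"
  shows "card {f. (\<forall>x\<in>A. f x \<in> B) \<and> (\<forall>x. x \<notin> A \<longrightarrow> f x = z)} = card B ^ card A"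
proof -
  have "bij_betw (\<lambda>f. restrict f A) {f. (\<forall>x\<in>A. f x \<in> B) \<and> (\<forall>x. x \<notin> A \<longrightarrow> f x = z)}
          (PiE A (\<lambda>_. B))"
    by (rule bij_betw_byWitness[where f'="\<lambda>g x. if x \<in> A then g x else z"])
       (auto simp: PiE_def extensional_def fun_eq_iff)
  hence "card {f. (\<forall>x\<in>A. f x \<in> B) \<and> (\<forall>x. x \<notin> A \<longrightarrow> f x = z)} = card (PiE A (\<lambda>_. B))"
    by (rule bij_betw_same_card)
  also have "\<dots> = card B ^ card A" using assms by (simp add: card_PiE)
  finally show ?thesis .
qed

lemma vecs_eq: "vecs n = {f. (\<forall>x\<in>{..<n}. f x \<in> UNIV) \<and> (\<forall>x. x \<notin> {..<n} \<longrightarrow> f x = 0)}"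
  by (auto simp: vecs_def)

lemma expts_eq: "expts n q = {f. (\<forall>x\<in>{..<n}. f x \<in> {..<q}) \<and> (\<forall>x. x \<notin> {..<n} \<longrightarrow> f x = 0)}"
  by (auto simp: expts_def)

lemma card_vecs: "card (vecs n :: (nat \<Rightarrow> 'a::{finite,zero}) set) = card (UNIV::'a set) ^ n"
  unfolding vecs_eq by (subst card_fset) auto

lemma card_expts: "card (expts n q) = q ^ n"
  unfolding expts_eq by (subst card_fset) auto

lemma finite_vecs: "finite (vecs n :: (nat \<Rightarrow> 'a::{finite,zero}) set)"
  using card_vecs[where 'a='a] by (intro card_ge_0_finite) (simp add: finite_UNIV_card_ge_0)

lemma finite_expts: "q > 0 \<Longrightarrow> finite (expts n q)"
  using card_expts[of n q] by (intro card_ge_0_finite) simp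

definition mono :: "nat \<Rightarrow> (nat \<Rightarrow> nat) \<Rightarrow> (nat \<Rightarrow> 'a) \<Rightarrow> 'a::comm_ring_1" where
  "mono n i x = (\<Prod>j<n. x j ^ i j)"

definition aeval :: "nat \<Rightarrow> ((nat \<Rightarrow> nat) \<Rightarrow> 'a) \<Rightarrow> (nat \<Rightarrow> 'a) \<Rightarrow> 'a::{finite,comm_ring_1}" where
  "aeval n c x = (\<Sum>i\<in>expts n (card (UNIV::'a set)). c i * mono n i x)"

lemma univ_zero:
  fixes d :: "nat \<Rightarrow> 'a::{finite,field}"
  assumes "\<forall>t. (\<Sum>m<card (UNIV::'a set).  d m * t ^ m) = 0" and "m < card (UNIV::'a set)"
  shows "d m = 0"
proof -
  define P where "P = (\<Sum>m<card (UNIV::'a set).  monom (d m) m)"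
  have ev: "poly P t = (\<Sum>m<card (UNIV::'a set).  d m * t ^ m)" for t
    by (simp add: P_def poly_sum poly_monom)
  have cf: "coeff P m = d m"
    using assms(2) by (simp add: P_def coeff_sum coeff_monom)
  show ?thesis
  proof (rule ccontr)
    assume "d m \<noteq> 0"
    hence "P \<noteq> 0" using cf by auto
    hence "card {x. poly P x = 0} \<le> degree P" by (rule card_poly_roots_bound)
    moreover have "{x. poly P x = 0} = UNIV" using ev assms(1) by auto
    moreover have "degree P < card (UNIV::'a set)"
    proof -
      show ?thesis unfolding P_def
        by (rule degree_sum_less) (auto intro: le_less_trans[OF degree_monom_le] simp: finite_UNIV_card_ge_0)
    qed
    ultimately show False by simp
  qed
qed

lemma card_pos: "0 < card (UNIV::'a::finite set)"
  by (simp add: finite_UNIV_card_ge_0)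

lemma expts_0: "q > 0 \<Longrightarrow> expts 0 q = {\<lambda>_. 0}"
  by (auto simp: expts_def)

lemma vecs_0: "vecs 0 = {\<lambda>_. 0}"
  by (auto simp: vecs_def)

lemma expts_Suc_bij:
  "bij_betw (\<lambda>(i',m). i'(n:=m)) (expts n q \<times> {..<q}) (expts (Suc n) q)"
  by (rule bij_betw_byWitness[where f'="\<lambda>i. (i(n:=0), i n)"])
     (auto simp: expts_def fun_eq_iff less_Suc_eq)

lemma mono_Suc:
  assumes "x' \<in> vecs n"
  shows "mono (Suc n) (i'(n:=m)) (x'(n:=t)) = mono n i' x' * t ^ m"
proof -
  have "(\<Prod>j<n. (x'(n:=t)) j ^ (i'(n:=m)) j) = (\<Prod>j<n. x' j ^ i' j)" by (rule prod.cong) auto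
  thus ?thesis by (simp add: mono_def prod.lessThan_Suc)
qed

lemma aeval_Suc:
  fixes c :: "(nat \<Rightarrow> nat) \<Rightarrow> 'a::{finite,field}"
  assumes "x' \<in> vecs n"
  shows "aeval (Suc n) c (x'(n:=t)) =
    (\<Sum>m<card (UNIV::'a set). (\<Sum>i'\<in>expts n (card (UNIV::'a set)). c (i'(n:=m)) * mono n i' x') * t ^ m)"
proof -
  let ?q = "card (UNIV::'a set)"
  have fin: "finite (expts n ?q)" using finite_expts card_pos by blast
  have "aeval (Suc n) c (x'(n:=t)) = (\<Sum>i\<in>expts (Suc n) ?q. c i * mono (Suc n) i (x'(n:=t)))"
    by (simp add: aeval_def)
  also have "\<dots> = (\<Sum>(i',m)\<in>expts n ?q \<times> {..<?q}. c (i'(n:=m)) * mono (Suc n) (i'(n:=m)) (x'(n:=t)))"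
    by (subst sum.reindex_bij_betw[OF expts_Suc_bij, symmetric]) (simp add: case_prod_beta)
  also have "\<dots> = (\<Sum>i'\<in>expts n ?q. \<Sum>m<?q. c (i'(n:=m)) * (mono n i' x' * t ^ m))"
    by (subst sum.cartesian_product[symmetric]) (simp add: mono_Suc[OF assms])
  also have "\<dots> = (\<Sum>m<?q. \<Sum>i'\<in>expts n ?q. c (i'(n:=m)) * (mono n i' x' * t ^ m))"
    by (rule sum.swap)
  also have "\<dots> = (\<Sum>m<?q. (\<Sum>i'\<in>expts n ?q. c (i'(n:=m)) * mono n i' x') * t ^ m)"
    by (simp add: sum_distrib_right mult.assoc)
  finally show ?thesis .
qed

lemma anf_unique0:
  fixes c :: "(nat \<Rightarrow> nat) \<Rightarrow> 'a::{finite,field}"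
  assumes "\<forall>i. i \<notin> expts n (card (UNIV::'a set)) \<longrightarrow> c i = 0"
    and "\<forall>x\<in>vecs n. aeval n c x = 0"
  shows "c i = 0"
  using assms
proof (induction n arbitrary: c i)
  case 0
  have "aeval 0 c (\<lambda>_. 0) = 0" using 0 by (simp add: vecs_0)
  hence "c (\<lambda>_. 0) = 0" by (simp add: aeval_def expts_0[OF card_pos] mono_def)
  thus ?case using 0 by (cases "i = (\<lambda>_. 0)") (auto simp: expts_0[OF card_pos])
next
  case (Suc n)
  let ?q = "card (UNIV::'a set)"
  define cm where "cm m = (\<lambda>i'. if i' \<in> expts n ?q then c (i'(n:=m)) else 0)" for m
  have "cm m i' = 0" if "m < ?q" for m i'
  proof (rule Suc.IH[of "cm m"])
    show "\<forall>i. i \<notin> expts n ?q \<longrightarrow> cm m i = 0" by (simp add: cm_def)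
    show "\<forall>x\<in>vecs n. aeval n (cm m) x = 0"
    proof
      fix x' :: "nat \<Rightarrow> 'a" assume x': "x' \<in> vecs n"
      have "\<forall>t. (\<Sum>m<?q. (\<Sum>i'\<in>expts n ?q. c (i'(n:=m)) * mono n i' x') * t ^ m) = 0"
      proof
        fix t
        have "x'(n:=t) \<in> vecs (Suc n)" using x' by (auto simp: vecs_def)
        thus "(\<Sum>m<?q. (\<Sum>i'\<in>expts n ?q. c (i'(n:=m)) * mono n i' x') * t ^ m) = 0"
          using Suc.prems(2) aeval_Suc[OF x', of c t] by simp
      qed
      from univ_zero[OF this that] have "(\<Sum>i'\<in>expts n ?q. c (i'(n:=m)) * mono n i' x') = 0" .
      thus "aeval n (cm m) x' = 0"
        by (simp add: aeval_def cm_def cong: sum.cong)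
    qed
  qed
  show ?case
  proof (cases "i \<in> expts (Suc n) ?q")
    case False thus ?thesis using Suc.prems by blast
  next
    case True
    have "i(n:=0) \<in> expts n ?q" "i n < ?q" using True by (auto simp: expts_def less_Suc_eq)
    with \<open>\<And>m i'. m < ?q \<Longrightarrow> cm m i' = 0\<close>[of "i n" "i(n:=0)"]
    show ?thesis by (simp add: cm_def)
  qed
qed

lemma aeval_diff: "aeval n c x - aeval n d x = aeval n (\<lambda>i. c i - d i) x"
  by (simp add: aeval_def sum_subtractf left_diff_distrib)

lemma anf_unique:
  fixes c d :: "(nat \<Rightarrow> nat) \<Rightarrow> 'a::{finite,field}"
  assumes "\<forall>i. i \<notin> expts n (card (UNIV::'a set)) \<longrightarrow> c i = 0"
    and "\<forall>i. i \<notin> expts n (card (UNIV::'a set)) \<longrightarrow> d i = 0"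
    and "\<forall>x\<in>vecs n. aeval n c x = aeval n d x"
  shows "c = d"
proof
  fix i
  have "(\<lambda>i. c i - d i) i = 0"
    by (rule anf_unique0[where c="\<lambda>i. c i - d i"]) (use assms in \<open>auto simp: aeval_diff[symmetric]\<close>)
  thus "c i = d i" by simp
qed

lemma anf_exists:
  fixes h :: "(nat \<Rightarrow> 'a::{finite,field}) \<Rightarrow> 'a"
  shows "\<exists>c. (\<forall>i. i \<notin> expts n (card (UNIV::'a set)) \<longrightarrow> c i = 0) \<and> (\<forall>x\<in>vecs n. h x = aeval n c x)"
proof -
  let ?q = "card (UNIV::'a set)"
  let ?E = "expts n ?q" and ?V = "vecs n :: (nat \<Rightarrow> 'a) set"
  define C where "C = {c :: (nat \<Rightarrow> nat) \<Rightarrow> 'a. (\<forall>i\<in>?E. c i \<in> UNIV) \<and> (\<forall>i. i \<notin> ?E \<longrightarrow> c i = 0)}"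
  define D where "D = {h :: (nat \<Rightarrow> 'a) \<Rightarrow> 'a. (\<forall>x\<in>?V. h x \<in> UNIV) \<and> (\<forall>x. x \<notin> ?V \<longrightarrow> h x = 0)}"
  define \<Phi> where "\<Phi> c = (\<lambda>x. if x \<in> ?V then aeval n c x else 0)" for c
  have finE: "finite ?E" using finite_expts card_pos by blast
  have finV: "finite ?V" by (rule finite_vecs)
  have inj: "inj_on \<Phi> C"
  proof
    fix c d assume "c \<in> C" "d \<in> C" "\<Phi> c = \<Phi> d"
    thus "c = d"
      by (intro anf_unique) (auto simp: C_def \<Phi>_def fun_eq_iff split: if_splits)
  qed
  have sub: "\<Phi> ` C \<subseteq> D" by (auto simp: \<Phi>_def D_def)
  have cC: "card C = ?q ^ (?q ^ n)"
    unfolding C_def by (subst card_fset[OF finE]) (simp add: card_expts)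
  have cD: "card D = ?q ^ (?q ^ n)"
    unfolding D_def by (subst card_fset[OF finV]) (simp add: card_vecs)
  have finD: "finite D" using cD card_pos[where 'a='a] by (intro card_ge_0_finite) simp
  have "card (\<Phi> ` C) = card D" using card_image[OF inj] cC cD by simp
  hence eq: "\<Phi> ` C = D" using card_subset_eq[OF finD sub] by simp
  have "(\<lambda>x. if x \<in> ?V then h x else 0) \<in> D" by (simp add: D_def)
  then obtain c where c: "c \<in> C" "\<Phi> c = (\<lambda>x. if x \<in> ?V then h x else 0)"
    unfolding eq[symmetric] by auto
  show ?thesis
  proof (intro exI conjI)
    show "\<forall>i. i \<notin> ?E \<longrightarrow> c i = 0" using c(1) by (simp add: C_def)
    show "\<forall>x\<in>?V. h x = aeval n c x" using c(2) by (auto simp: \<Phi>_def fun_eq_iff split: if_splits)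
  qed
qed

lemma anf_coeff_props:
  fixes h :: "(nat \<Rightarrow> 'a::{finite,field}) \<Rightarrow> 'a"
  shows "(\<forall>i. i \<notin> expts n (card (UNIV::'a set)) \<longrightarrow> anf_coeff n h i = 0) \<and>
         (\<forall>x\<in>vecs n. h x = aeval n (anf_coeff n h) x)"
proof -
  have ex1: "\<exists>!c. (\<forall>i. i \<notin> expts n (card (UNIV::'a set)) \<longrightarrow> c i = 0) \<and> (\<forall>x\<in>vecs n. h x = aeval n c x)"
  proof (rule ex_ex1I)
    show "\<exists>c. (\<forall>i. i \<notin> expts n (card (UNIV::'a set)) \<longrightarrow> c i = 0) \<and> (\<forall>x\<in>vecs n. h x = aeval n c x)"
      by (rule anf_exists)
  next
    fix c d assume "(\<forall>i. i \<notin> expts n (card (UNIV::'a set)) \<longrightarrow> c i = 0) \<and> (\<forall>x\<in>vecs n. h x = aeval n c x)"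
      "(\<forall>i. i \<notin> expts n (card (UNIV::'a set)) \<longrightarrow> d i = 0) \<and> (\<forall>x\<in>vecs n. h x = aeval n d x)"
    hence "\<forall>i. i \<notin> expts n (card (UNIV::'a set)) \<longrightarrow> c i = 0"
      "\<forall>i. i \<notin> expts n (card (UNIV::'a set)) \<longrightarrow> d i = 0"
      "\<forall>x\<in>vecs n. aeval n c x = aeval n d x" by (blast, blast, metis)
    thus "c = d" by (rule anf_unique)
  qed
  have "?thesis = ((\<forall>i. i \<notin> expts n (card (UNIV::'a set)) \<longrightarrow> anf_coeff n h i = 0) \<and>
         (\<forall>x\<in>vecs n. h x = (\<Sum>i\<in>expts n (card (UNIV::'a set)). anf_coeff n h i * (\<Prod>j<n. x j ^ i j))))"
    by (simp only: aeval_def mono_def)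
  also have "\<dots>" unfolding anf_coeff_def
    by (rule theI'[OF ex1[unfolded aeval_def mono_def]])
  finally show ?thesis .
qed


definition dl :: "nat \<Rightarrow> nat \<Rightarrow> 'a::comm_ring_1" where
  "dl l = (\<lambda>k. if k = l then 1 else 0)"

lemma mono_shift:
  fixes x :: "nat \<Rightarrow> 'a::comm_ring_1"
  assumes "l < n"
  shows "mono n i (\<lambda>k. x k + dl l k) - mono n i x =
         (\<Sum>m<i l. of_nat (i l choose m) * mono n (i(l:=m)) x)"
proof -
  define R where "R = (\<Prod>j\<in>{..<n}-{l}. x j ^ i j)"
  have split: "mono n i' y = y l ^ i' l * (\<Prod>j\<in>{..<n}-{l}. y j ^ i' j)" for i' and y :: "nat \<Rightarrow> 'a"
    unfolding mono_def using assms by (subst prod.remove[of _ l]) auto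
  have R1: "(\<Prod>j\<in>{..<n}-{l}. (x j + dl l j) ^ i j) = R"
    unfolding R_def by (rule prod.cong) (auto simp: dl_def)
  have R2: "\<And>m. (\<Prod>j\<in>{..<n}-{l}. x j ^ (i(l:=m)) j) = R" 
    unfolding R_def by (intro prod.cong) auto
  have bin: "(x l + 1) ^ i l = (\<Sum>m<i l. of_nat (i l choose m) * x l ^ m) + x l ^ i l"
    by (simp add: binomial_ring[of "x l" 1] lessThan_Suc_atMost[symmetric])
  have "mono n i (\<lambda>k. x k + dl l k) - mono n i x = ((x l + 1) ^ i l - x l ^ i l) * R"
    by (simp add: split R1 dl_def R_def[symmetric] algebra_simps)
  also have "\<dots> = (\<Sum>m<i l. of_nat (i l choose m) * (x l ^ m * R))"
    by (simp add: bin sum_distrib_right mult.assoc)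
  also have "\<dots> = (\<Sum>m<i l. of_nat (i l choose m) * mono n (i(l:=m)) x)"
    using R2 by (simp add: split)
  finally show ?thesis .
qed

lemma delta_aeval:
  fixes f :: "(nat \<Rightarrow> nat) \<Rightarrow> 'a::{finite,field}"
  assumes "l < n"
  shows "aeval n f (\<lambda>k. x k + dl l k) - aeval n f x =
    aeval n (\<lambda>i. \<Sum>k\<in>{i l + 1..card (UNIV::'a set) - 1}. of_nat (k choose (k - i l)) * f (i(l := k))) x"
proof -
  let ?q = "card (UNIV::'a set)"
  let ?E = "expts n ?q"
  have finE: "finite ?E" using finite_expts card_pos by blast
  have "aeval n f (\<lambda>k. x k + dl l k) - aeval n f x =
        (\<Sum>i\<in>?E. f i * (mono n i (\<lambda>k. x k + dl l k) - mono n i x))"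
    by (simp add: aeval_def sum_subtractf right_diff_distrib)
  also have "\<dots> = (\<Sum>i\<in>?E. \<Sum>m<i l. f i * of_nat (i l choose m) * mono n (i(l:=m)) x)"
    by (simp add: mono_shift[OF assms] sum_distrib_left mult.assoc)
  also have "\<dots> = (\<Sum>(i,m)\<in>Sigma ?E (\<lambda>i. {..<i l}). f i * of_nat (i l choose m) * mono n (i(l:=m)) x)"
    by (rule sum.Sigma) (auto simp: finE)
  also have "\<dots> = (\<Sum>(i,k)\<in>Sigma ?E (\<lambda>i. {i l + 1..?q - 1}). of_nat (k choose (k - i l)) * f (i(l := k)) * mono n i x)"
  proof (rule sum.reindex_bij_witness[where j="\<lambda>(i,m). (i(l:=m), i l)" and i="\<lambda>(i,k). (i(l:=k), i l)"])
    fix a assume "a \<in> Sigma ?E (\<lambda>i. {..<i l})"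
    then obtain i m where a: "a = (i,m)" "i \<in> ?E" "m < i l" by auto
    have il: "i l < ?q" using a(2) assms by (auto simp: expts_def)
    show "(case case a of (i, m) \<Rightarrow> (i(l := m), i l) of (i, k) \<Rightarrow> (i(l := k), i l)) = a"
      using a by auto
    show "(case a of (i, m) \<Rightarrow> (i(l := m), i l)) \<in> Sigma ?E (\<lambda>i. {i l + 1..?q - 1})"
      using a il assms by (auto simp: expts_def)
    show "(case case a of (i, m) \<Rightarrow> (i(l := m), i l) of
           (i, k) \<Rightarrow> of_nat (k choose (k - i l)) * f (i(l := k)) * mono n i x) =
          (case a of (i, m) \<Rightarrow> f i * of_nat (i l choose m) * mono n (i(l := m)) x)"
      using a by (simp add: binomial_symmetric[of m "i l", symmetric])
  next
    fix b assume "b \<in> Sigma ?E (\<lambda>i. {i l + 1..?q - 1})"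
    then obtain i k where b: "b = (i,k)" "i \<in> ?E" "i l + 1 \<le> k" "k \<le> ?q - 1" by auto
    show "(case case b of (i, k) \<Rightarrow> (i(l := k), i l) of (i, m) \<Rightarrow> (i(l := m), i l)) = b"
      using b by auto
    show "(case b of (i, k) \<Rightarrow> (i(l := k), i l)) \<in> Sigma ?E (\<lambda>i. {..<i l})"
      using b assms card_pos[where 'a='a] by (auto simp: expts_def)
  qed
  also have "\<dots> = (\<Sum>i\<in>?E. \<Sum>k\<in>{i l + 1..?q - 1}. of_nat (k choose (k - i l)) * f (i(l := k)) * mono n i x)"
    by (rule sum.Sigma[symmetric]) (auto simp: finE)
  also have "\<dots> = aeval n (\<lambda>i. \<Sum>k\<in>{i l + 1..?q - 1}. of_nat (k choose (k - i l)) * f (i(l := k))) x"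
    by (simp add: aeval_def sum_distrib_right)
  finally show ?thesis .
qed

lemma step3:
  fixes f g :: "(nat \<Rightarrow> nat) \<Rightarrow> 'a::comm_ring_1"
  assumes q: "q \<ge> 2" and n: "n \<ge> 2"
  shows "(\<forall>i\<in>expts n q. (\<Sum>k\<in>{i 0 + 1..q - 1}. of_nat (k choose (k - i 0)) * f (i(0 := k)))
            = (\<Sum>k\<in>{i 1 + 1..q - 1}. of_nat (k choose (k - i 1)) * g (i(1 := k))))
    \<longleftrightarrow> ((\<forall>i\<in>expts n q. i 0 \<le> q - 2 \<longrightarrow> i 1 \<le> q - 2 \<longrightarrow>
             (\<Sum>k\<in>{i 0 + 1..q - 1}. of_nat (k choose (k - i 0)) * f (i(0 := k)))
           = (\<Sum>k\<in>{i 1 + 1..q - 1}. of_nat (k choose (k - i 1)) * g (i(1 := k))))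
        \<and> (\<forall>j\<in>{0..q - 2}. \<forall>i\<in>expts n q.
             (\<Sum>k\<in>{j + 1..q - 1}. of_nat (k choose (k - j)) * f (i(0 := k, 1 := q - 1))) = 0
           \<and> (\<Sum>k\<in>{j + 1..q - 1}. of_nat (k choose (k - j)) * g (i(0 := q - 1, 1 := k))) = 0))"
  (is "?L \<longleftrightarrow> ?C1 \<and> ?C2")
proof
  assume L: ?L
  show "?C1 \<and> ?C2"
  proof
    show ?C1 using L by blast
    show ?C2
    proof (intro ballI conjI)
      fix j i assume j: "j \<in> {0..q - 2}" and i: "i \<in> expts n q"
      define i' where "i' = i(0:=j, 1:=q-1)"
      have "i' \<in> expts n q" using i j q n by (auto simp: expts_def i'_def)
      with L have e: "(\<Sum>k\<in>{i' 0 + 1..q - 1}. of_nat (k choose (k - i' 0)) * f (i'(0 := k)))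
            = (\<Sum>k\<in>{i' 1 + 1..q - 1}. of_nat (k choose (k - i' 1)) * g (i'(1 := k)))" by blast
      have "i'(0:=k) = i(0 := k, 1 := q - 1)" for k by (auto simp: i'_def fun_eq_iff)
      moreover have "{i' 1 + 1..q - 1} = {}" using q by (auto simp: i'_def)
      ultimately show "(\<Sum>k\<in>{j + 1..q - 1}. of_nat (k choose (k - j)) * f (i(0 := k, 1 := q - 1))) = 0"
        using e by (simp add: i'_def)
      define i'' where "i'' = i(0:=q-1, 1:=j)"
      have "i'' \<in> expts n q" using i j q n by (auto simp: expts_def i''_def)
      with L have e2: "(\<Sum>k\<in>{i'' 0 + 1..q - 1}. of_nat (k choose (k - i'' 0)) * f (i''(0 := k)))
            = (\<Sum>k\<in>{i'' 1 + 1..q - 1}. of_nat (k choose (k - i'' 1)) * g (i''(1 := k)))" by blast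
      have "i''(1:=k) = i(0 := q - 1, 1 := k)" for k by (auto simp: i''_def fun_eq_iff)
      moreover have "{i'' 0 + 1..q - 1} = {}" using q by (auto simp: i''_def)
      ultimately show "(\<Sum>k\<in>{j + 1..q - 1}. of_nat (k choose (k - j)) * g (i(0 := q - 1, 1 := k))) = 0"
        using e2 by (simp add: i''_def)
    qed
  qed
next
  assume C: "?C1 \<and> ?C2"
  show ?L
  proof
    fix i assume i: "i \<in> expts n q"
    have i0: "i 0 < q" and i1: "i 1 < q" using i n by (auto simp: expts_def)
    show "(\<Sum>k\<in>{i 0 + 1..q - 1}. of_nat (k choose (k - i 0)) * f (i(0 := k)))
            = (\<Sum>k\<in>{i 1 + 1..q - 1}. of_nat (k choose (k - i 1)) * g (i(1 := k)))"
    proof (cases "i 0 \<le> q - 2")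
      case a: True
      show ?thesis
      proof (cases "i 1 \<le> q - 2")
        case True thus ?thesis using a C i by blast
      next
        case False
        hence i1': "i 1 = q - 1" using i1 by simp
        have "{i 1 + 1..q - 1} = {}" using i1' q by auto
        moreover have "i(0 := k, 1 := q - 1) = i(0:=k)" for k using i1' by (auto simp: fun_eq_iff)
        moreover have "(\<Sum>k\<in>{i 0 + 1..q - 1}. of_nat (k choose (k - i 0)) * f (i(0 := k, 1 := q - 1))) = 0"
          using C i a by simp
        ultimately show ?thesis by simp
      qed
    next
      case a: False
      hence i0': "i 0 = q - 1" using i0 by simp
      have e0: "{i 0 + 1..q - 1} = {}" using i0' q by auto
      show ?thesis
      proof (cases "i 1 \<le> q - 2")
        case True
        have "i(0 := q - 1, 1 := k) = i(1:=k)" for k using i0' by (auto simp: fun_eq_iff)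
        moreover have "(\<Sum>k\<in>{i 1 + 1..q - 1}. of_nat (k choose (k - i 1)) * g (i(0 := q - 1, 1 := k))) = 0"
          using C i True by simp
        ultimately show ?thesis using e0 by simp
      next
        case False
        hence "i 1 = q - 1" using i1 by simp
        hence "{i 1 + 1..q - 1} = {}" using q by auto
        thus ?thesis using e0 by simp
      qed
    qed
  qed
qed


lemma shift_vecs: "c \<in> vecs n \<Longrightarrow> l < n \<Longrightarrow> (\<lambda>k. c k + dl l k) \<in> vecs n"
  by (auto simp: vecs_def dl_def)

lemma aeval_eq_iff:
  fixes A B :: "(nat \<Rightarrow> nat) \<Rightarrow> 'a::{finite,field}"
  shows "(\<forall>c\<in>vecs n. aeval n A c = aeval n B c) \<longleftrightarrow> (\<forall>i\<in>expts n (card (UNIV::'a set)). A i = B i)"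
proof
  assume H: "\<forall>c\<in>vecs n. aeval n A c = aeval n B c"
  let ?E = "expts n (card (UNIV::'a set))"
  define A' where "A' i = (if i \<in> ?E then A i else 0)" for i
  define B' where "B' i = (if i \<in> ?E then B i else 0)" for i
  have "aeval n A' c = aeval n A c" "aeval n B' c = aeval n B c" for c
    by (auto simp: aeval_def A'_def B'_def intro!: sum.cong)
  hence "A' = B'" using H by (intro anf_unique) (auto simp: A'_def B'_def)
  thus "\<forall>i\<in>?E. A i = B i" by (metis A'_def B'_def)
next
  assume "\<forall>i\<in>expts n (card (UNIV::'a set)). A i = B i"
  thus "\<forall>c\<in>vecs n. aeval n A c = aeval n B c" by (auto simp: aeval_def intro!: sum.cong)
qed

lemma step2:
  fixes hF hG :: "(nat \<Rightarrow> 'a) \<Rightarrow> 'a::{finite,field}"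
  assumes n: "n \<ge> 2"
  shows "(\<forall>c\<in>vecs n. hF (\<lambda>k. c k + dl 0 k) - hF c = hG (\<lambda>k. c k + dl 1 k) - hG c)
    \<longleftrightarrow> (\<forall>i\<in>expts n (card (UNIV::'a set)).
          (\<Sum>k\<in>{i 0 + 1..card (UNIV::'a set) - 1}. of_nat (k choose (k - i 0)) * anf_coeff n hF (i(0 := k)))
        = (\<Sum>k\<in>{i 1 + 1..card (UNIV::'a set) - 1}. of_nat (k choose (k - i 1)) * anf_coeff n hG (i(1 := k))))"
proof -
  have PF: "\<forall>x\<in>vecs n. hF x = aeval n (anf_coeff n hF) x" using anf_coeff_props by blast
  have PG: "\<forall>x\<in>vecs n. hG x = aeval n (anf_coeff n hG) x" using anf_coeff_props by blast
  have "(\<forall>c\<in>vecs n. hF (\<lambda>k. c k + dl 0 k) - hF c = hG (\<lambda>k. c k + dl 1 k) - hG c)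
     \<longleftrightarrow> (\<forall>c\<in>vecs n. aeval n (\<lambda>i. \<Sum>k\<in>{i 0 + 1..card (UNIV::'a set) - 1}. of_nat (k choose (k - i 0)) * anf_coeff n hF (i(0 := k))) c
          = aeval n (\<lambda>i. \<Sum>k\<in>{i 1 + 1..card (UNIV::'a set) - 1}. of_nat (k choose (k - i 1)) * anf_coeff n hG (i(1 := k))) c)"
  proof (intro ball_cong refl)
    fix c :: "nat \<Rightarrow> 'a" assume c: "c \<in> vecs n"
    have s0: "(\<lambda>k. c k + dl 0 k) \<in> vecs n" and s1: "(\<lambda>k. c k + dl 1 k) \<in> vecs n"
      using shift_vecs[OF c] n by auto
    have "hF (\<lambda>k. c k + dl 0 k) - hF c = aeval n (anf_coeff n hF) (\<lambda>k. c k + dl 0 k) - aeval n (anf_coeff n hF) c"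
      using PF s0 c by simp
    also have "\<dots> = aeval n (\<lambda>i. \<Sum>k\<in>{i 0 + 1..card (UNIV::'a set) - 1}. of_nat (k choose (k - i 0)) * anf_coeff n hF (i(0 := k))) c"
      by (rule delta_aeval) (use n in simp)
    finally have 1: "hF (\<lambda>k. c k + dl 0 k) - hF c = \<dots>" .
    have "hG (\<lambda>k. c k + dl 1 k) - hG c = aeval n (anf_coeff n hG) (\<lambda>k. c k + dl 1 k) - aeval n (anf_coeff n hG) c"
      using PG s1 c by simp
    also have "\<dots> = aeval n (\<lambda>i. \<Sum>k\<in>{i 1 + 1..card (UNIV::'a set) - 1}. of_nat (k choose (k - i 1)) * anf_coeff n hG (i(1 := k))) c"
      by (rule delta_aeval) (use n in simp)
    finally have 2: "hG (\<lambda>k. c k + dl 1 k) - hG c = \<dots>" .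
    show "(hF (\<lambda>k. c k + dl 0 k) - hF c = hG (\<lambda>k. c k + dl 1 k) - hG c) = (aeval n (\<lambda>i. \<Sum>k\<in>{i 0 + 1..card (UNIV::'a set) - 1}. of_nat (k choose (k - i 0)) * anf_coeff n hF (i(0 := k))) c
          = aeval n (\<lambda>i. \<Sum>k\<in>{i 1 + 1..card (UNIV::'a set) - 1}. of_nat (k choose (k - i 1)) * anf_coeff n hG (i(1 := k))) c)"
      by (simp only: 1 2)
  qed
  also have "\<dots> \<longleftrightarrow> (\<forall>i\<in>expts n (card (UNIV::'a set)).
          (\<Sum>k\<in>{i 0 + 1..card (UNIV::'a set) - 1}. of_nat (k choose (k - i 0)) * anf_coeff n hF (i(0 := k)))
        = (\<Sum>k\<in>{i 1 + 1..card (UNIV::'a set) - 1}. of_nat (k choose (k - i 1)) * anf_coeff n hG (i(1 := k))))"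
    by (rule aeval_eq_iff)
  finally show ?thesis .
qed


lemma lincomb_vecs: "\<forall>j<n. e j \<in> vecs n \<Longrightarrow> lincomb n c e \<in> vecs n"
  by (auto simp: vecs_def lincomb_def)

lemma vadd_vecs: "(x :: nat \<Rightarrow> 'a::monoid_add) \<in> vecs n \<Longrightarrow> y \<in> vecs n \<Longrightarrow> vadd x y \<in> vecs n"
  by (auto simp: vecs_def vadd_def)

lemma lincomb_shift:
  fixes e :: "nat \<Rightarrow> nat \<Rightarrow> 'a::comm_ring_1"
  assumes "l < n"
  shows "lincomb n (\<lambda>k. c k + dl l k) e = vadd (lincomb n c e) (e l)"
proof
  fix k
  have "(\<Sum>j<n. (c j + dl l j) * e j k) = (\<Sum>j<n. c j * e j k) + (\<Sum>j<n. dl l j * e j k)"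
    by (simp add: distrib_right sum.distrib)
  also have "(\<Sum>j<n. dl l j * e j k) = (\<Sum>j<n. if j = l then e j k else 0)"
    by (rule sum.cong) (auto simp: dl_def)
  also have "\<dots> = e l k" using assms by (simp add: sum.delta')
  finally show "lincomb n (\<lambda>k. c k + dl l k) e k = vadd (lincomb n c e) (e l) k"
    by (simp add: lincomb_def vadd_def)
qed

lemma comp_dl:
  assumes "k < n" shows "comp_fun n (dl k) F x = F x k"
proof -
  have "comp_fun n (dl k) F x = (\<Sum>j<n. if j = k then F x j else 0)"
    unfolding comp_fun_def by (rule sum.cong) (auto simp: dl_def)
  also have "\<dots> = F x k" using assms by (simp add: sum.delta')
  finally show ?thesis .
qed

lemma comp_diff:
  "comp_fun n \<mu> F x - comp_fun n \<mu> F y = (\<Sum>k<n. \<mu> k * vsub (F x) (F y) k)"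
  by (simp add: comp_fun_def vsub_def sum_subtractf right_diff_distrib)

theorem theorem3:
  fixes F G :: "(nat \<Rightarrow> 'a::{finite,field}) \<Rightarrow> (nat \<Rightarrow> 'a)"
    and e :: "nat \<Rightarrow> nat \<Rightarrow> 'a" and n :: nat
  assumes "prime (card (UNIV :: 'a set))" and "n \<ge> 2"
    and "\<forall>x\<in>vecs n. F x \<in> vecs n" and "\<forall>x\<in>vecs n. G x \<in> vecs n"
    and "is_basis n e"
  shows "(\<forall>c\<in>vecs n.
            vsub (F (vadd (lincomb n c e) (e 0))) (F (lincomb n c e))
          = vsub (G (vadd (lincomb n c e) (e 1))) (G (lincomb n c e)))
    \<longleftrightarrow>
    (\<forall>\<mu>\<in>vecs n. \<mu> \<noteq> (\<lambda>_. 0) \<longrightarrow>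
      (let p = card (UNIV :: 'a set);
           f = anf_coeff n (\<lambda>c. comp_fun n \<mu> F (lincomb n c e));
           g = anf_coeff n (\<lambda>c. comp_fun n \<mu> G (lincomb n c e))
       in (\<forall>i\<in>expts n p. i 0 \<le> p - 2 \<longrightarrow> i 1 \<le> p - 2 \<longrightarrow>
             (\<Sum>k\<in>{i 0 + 1..p - 1}. of_nat (k choose (k - i 0)) * f (i(0 := k)))
           = (\<Sum>k\<in>{i 1 + 1..p - 1}. of_nat (k choose (k - i 1)) * g (i(1 := k))))
        \<and> (\<forall>j\<in>{0..p - 2}. \<forall>i\<in>expts n p.
             (\<Sum>k\<in>{j + 1..p - 1}. of_nat (k choose (k - j)) * f (i(0 := k, 1 := p - 1))) = 0
           \<and> (\<Sum>k\<in>{j + 1..p - 1}. of_nat (k choose (k - j)) * g (i(0 := p - 1, 1 := k))) = 0)))"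
proof -
  note n = assms(2)
  let ?q = "card (UNIV :: 'a set)"
  have q: "?q \<ge> 2" using assms(1) by (simp add: prime_ge_2_nat)
  have eV: "\<forall>j<n. e j \<in> vecs n" using assms(5) by (simp add: is_basis_def)
  define hF where "hF \<mu> = (\<lambda>c. comp_fun n \<mu> F (lincomb n c e))" for \<mu>
  define hG where "hG \<mu> = (\<lambda>c. comp_fun n \<mu> G (lincomb n c e))" for \<mu>
  have step1: "(\<forall>c\<in>vecs n.
            vsub (F (vadd (lincomb n c e) (e 0))) (F (lincomb n c e))
          = vsub (G (vadd (lincomb n c e) (e 1))) (G (lincomb n c e)))
     \<longleftrightarrow> (\<forall>\<mu>\<in>vecs n. \<mu> \<noteq> (\<lambda>_. 0) \<longrightarrow>
            (\<forall>c\<in>vecs n. hF \<mu> (\<lambda>k. c k + dl 0 k) - hF \<mu> c = hG \<mu> (\<lambda>k. c k + dl 1 k) - hG \<mu> c))"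
  proof (intro iffI ballI impI)
    fix \<mu> c :: "nat \<Rightarrow> 'a"
    assume H: "\<forall>c\<in>vecs n.
            vsub (F (vadd (lincomb n c e) (e 0))) (F (lincomb n c e))
          = vsub (G (vadd (lincomb n c e) (e 1))) (G (lincomb n c e))" and c: "c \<in> vecs n"
    show "hF \<mu> (\<lambda>k. c k + dl 0 k) - hF \<mu> c = hG \<mu> (\<lambda>k. c k + dl 1 k) - hG \<mu> c"
      using H c n by (simp add: hF_def hG_def lincomb_shift comp_diff)
  next
    fix c :: "nat \<Rightarrow> 'a"
    assume H: "\<forall>\<mu>\<in>vecs n. \<mu> \<noteq> (\<lambda>_. 0) \<longrightarrow>
            (\<forall>c\<in>vecs n. hF \<mu> (\<lambda>k. c k + dl 0 k) - hF \<mu> c = hG \<mu> (\<lambda>k. c k + dl 1 k) - hG \<mu> c)"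
      and c: "c \<in> vecs n"
    have L: "lincomb n c e \<in> vecs n" by (rule lincomb_vecs[OF eV])
    have L0: "vadd (lincomb n c e) (e 0) \<in> vecs n" using vadd_vecs[OF L] eV n by simp
    have L1: "vadd (lincomb n c e) (e 1) \<in> vecs n" using vadd_vecs[OF L] eV n by simp
    show "vsub (F (vadd (lincomb n c e) (e 0))) (F (lincomb n c e))
          = vsub (G (vadd (lincomb n c e) (e 1))) (G (lincomb n c e))"
    proof
      fix k
      show "vsub (F (vadd (lincomb n c e) (e 0))) (F (lincomb n c e)) k
          = vsub (G (vadd (lincomb n c e) (e 1))) (G (lincomb n c e)) k"
      proof (cases "k < n")
        case True
        have dV: "dl k \<in> vecs n" using True by (auto simp: vecs_def dl_def)
        have dn: "dl k \<noteq> (\<lambda>_. 0 :: 'a)" by (auto simp: dl_def fun_eq_iff)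
        have "hF (dl k) (\<lambda>j. c j + dl 0 j) - hF (dl k) c = hG (dl k) (\<lambda>j. c j + dl 1 j) - hG (dl k) c"
          using H dV dn c by blast
        thus ?thesis using True n by (simp add: hF_def hG_def comp_dl lincomb_shift vsub_def)
      next
        case False
        thus ?thesis using assms(3,4) L L0 L1 by (auto simp: vsub_def vecs_def)
      qed
    qed
  qed
  have per: "(\<forall>c\<in>vecs n. hF \<mu> (\<lambda>k. c k + dl 0 k) - hF \<mu> c = hG \<mu> (\<lambda>k. c k + dl 1 k) - hG \<mu> c)
    \<longleftrightarrow> (let p = card (UNIV :: 'a set);
           f = anf_coeff n (\<lambda>c. comp_fun n \<mu> F (lincomb n c e));
           g = anf_coeff n (\<lambda>c. comp_fun n \<mu> G (lincomb n c e))
       in (\<forall>i\<in>expts n p. i 0 \<le> p - 2 \<longrightarrow> i 1 \<le> p - 2 \<longrightarrow>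
             (\<Sum>k\<in>{i 0 + 1..p - 1}. of_nat (k choose (k - i 0)) * f (i(0 := k)))
           = (\<Sum>k\<in>{i 1 + 1..p - 1}. of_nat (k choose (k - i 1)) * g (i(1 := k))))
        \<and> (\<forall>j\<in>{0..p - 2}. \<forall>i\<in>expts n p.
             (\<Sum>k\<in>{j + 1..p - 1}. of_nat (k choose (k - j)) * f (i(0 := k, 1 := p - 1))) = 0
           \<and> (\<Sum>k\<in>{j + 1..p - 1}. of_nat (k choose (k - j)) * g (i(0 := p - 1, 1 := k))) = 0))" for \<mu>
    using trans[OF step2[OF n, of "hF \<mu>" "hG \<mu>"] step3[OF q n, of "anf_coeff n (hF \<mu>)" "anf_coeff n (hG \<mu>)"]]
    unfolding Let_def hF_def hG_def .
  show ?thesis unfolding step1 per ..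
qed

end
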